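(* Let $F\subseteq E(H)$ with $|F|=\ell$. If there exist a tree embedding $(\mathcal T,\mathcal M,y)$ and a set of edges $E_b\subseteq E(\mathcal T)\setminus\mathcal M^{-1}(F)$ such that for every pair $(A,B)\in Z_F$ there is a path in $\mathcal T$ using only edges of $E_b$ connecting a leaf of $A$ to a leaf of $B$, then for every $i\in[q]$ the graph $(V,(E(H)\cup\mathcal M(E_b))\setminus F)$ contains a path from a vertex of $S_i$ to a vertex of $T_i$.
   Context: Standing setup. $G=(V,E)$ is an undirected graph with $n=|V|$, demand-pairs $(S_i,T_i)$, $i\in[q]$, of subsets of $V$. $\ell\ge1$ is an integer and $E_\ell\subseteq E$ an edge set such that in $(V,E_\ell)$ every $(S_i,T_i)$ is $\ell$-edge-connected. $x:E\to[0,1]$ satisfies $x_e=1$ for $e\in E_\ell$ and $\sum_{e\in\delta_G(X)}x_e\ge \ell+1$ for every $i\in[q]$ and every $X$ with $T_i\subseteq X\subseteq V\setminus S_i$. $\beta\ge1$ is a real. $\mathsf{LARGE}=\{e: x_e\ge 1/(4\ell\beta)\}$ and $H=(V,\mathsf{LARGE})$. Capacities: $\tilde x_e=1/(4\ell\beta)$ if $e\in\mathsf{LARGE}$; $\tilde x_e=0$ if $x_e<\frac{1}{2n^2}\cdot\frac1{4\ell\beta}$; $\tilde x_e=x_e$ otherwise. A tree embedding $(\mathcal T,\mathcal M,y)$ of $(G,\tilde x)$: $\mathcal T$ is a tree; $\mathcal M$ maps nodes of $\mathcal T$ to vertices of $G$ and is a bijection between leaves of $\mathcal T$ and $V$ (a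 vertex set of $G$ is identified with the corresponding leaf set); each tree edge $f=(u,v)$ is mapped to a path $\mathcal M(f)$ in $G$ between $\mathcal M(u)$ and $\mathcal M(v)$; $y(f)=\tilde x(\delta_G(X))$ where $(X,V\setminus X)$ is the leaf partition induced by $\mathcal T-f$. $\mathcal M^{-1}(e)=\{f: e\in\mathcal M(f)\}$, $\mathcal M^{-1}(F)=\bigcup_{e\in F}\mathcal M^{-1}(e)$, $\mathcal M(E')=\bigcup_{f\in E'}\mathcal M(f)$. Components: $\mathbb Q^F$ is the set of vertex sets of connected components of $(V,E(H)\setminus F)$; for nonempty $S\subseteq V$, $Q_S$ is the union of those components meeting $S$. A component $Q\in\mathbb Q^F$ is shattered (w.r.t. $\mathcal T$) if its leaves are not all in one connected component of $\mathcal T$ with the edges $\mathcal M^{-1}(F)$ removed, and intact otherwise. $\mathbb U^F_{\mathcal T}$ is the set of all partitions $(A',B')$ (parts may be empty) of the set of shattered components, and $Z_F=\{(A'\cup Q_{S_i},\,B'\cup Q_{T_i}) : (A',B')\in\mathbb U^F_{\mathcal T},\ i\in[q],\ Q_{S_i}\cap Q_{T_i}=\emptyset\}$, where $A'$, $B'$ are identified with the union of their components. *)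

theory Defs
  imports Complex_Main "HOL-Library.FuncSet"
begin

definition graph :: "'a set \<Rightarrow> 'a set set \<Rightarrow> bool" where
  "graph V E \<longleftrightarrow> finite V \<and> (\<forall>e\<in>E. e \<subseteq> V \<and> card e = 2)"

definition is_path :: "'a set \<Rightarrow> 'a set set \<Rightarrow> 'a list \<Rightarrow> bool" where
  "is_path V Es p \<longleftrightarrow> p \<noteq> [] \<and> set p \<subseteq> V \<and> distinct p \<and>
     (\<forall>i. Suc i < length p \<longrightarrow> {p ! i, p ! Suc i} \<in> Es)"

definition path_edges :: "'a list \<Rightarrow> 'a set set" where
  "path_edges p = {{p ! i, p ! Suc i} | i. Suc i < length p}"

definition has_path :: "'a set \<Rightarrow> 'a set set \<Rightarrow> 'a \<Rightarrow> 'a \<Rightarrow> bool" where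
  "has_path V Es u v \<longleftrightarrow> (\<exists>p. is_path V Es p \<and> hd p = u \<and> last p = v)"

definition cut :: "'a set \<Rightarrow> 'a set set \<Rightarrow> 'a set \<Rightarrow> 'a set set" where
  "cut V E X = {e \<in> E. e \<inter> X \<noteq> {} \<and> e \<inter> (V - X) \<noteq> {}}"

definition components :: "'a set \<Rightarrow> 'a set set \<Rightarrow> 'a set set" where
  "components V Es = {{w \<in> V. has_path V Es v w} | v. v \<in> V}"

definition compQ :: "'a set \<Rightarrow> 'a set set \<Rightarrow> 'a set \<Rightarrow> 'a set" where
  "compQ V Es S = \<Union>{Q \<in> components V Es. Q \<inter> S \<noteq> {}}"

definition is_tree :: "'n set \<Rightarrow> 'n set set \<Rightarrow> bool" where
  "is_tree N TE \<longleftrightarrow> graph N TE \<and> N \<noteq> {} \<and>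
     (\<forall>u\<in>N. \<forall>v\<in>N. has_path N TE u v) \<and>
     (\<forall>f\<in>TE. \<forall>u v. f = {u, v} \<longrightarrow> \<not> has_path N (TE - {f}) u v)"

text \<open>Leaves of a tree: nodes of degree at most one (degree one unless the tree is a single node).\<close>
definition leaves :: "'n set \<Rightarrow> 'n set set \<Rightarrow> 'n set" where
  "leaves N TE = {u \<in> N. card {f \<in> TE. u \<in> f} \<le> 1}"

definition leaf_set :: "'n set \<Rightarrow> 'n set set \<Rightarrow> ('n \<Rightarrow> 'v) \<Rightarrow> 'v set \<Rightarrow> 'n set" where
  "leaf_set N TE M A = {u \<in> leaves N TE. M u \<in> A}"

definition xtilde :: "nat \<Rightarrow> real \<Rightarrow> nat \<Rightarrow> ('v set \<Rightarrow> real) \<Rightarrow> 'v set \<Rightarrow> real" where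
  "xtilde l \<beta> n x e =
     (if x e \<ge> 1 / (4 * real l * \<beta>) then 1 / (4 * real l * \<beta>)
      else if x e < 1 / (2 * (real n)\<^sup>2) * (1 / (4 * real l * \<beta>)) then 0
      else x e)"

definition LARGE :: "'v set set \<Rightarrow> nat \<Rightarrow> real \<Rightarrow> ('v set \<Rightarrow> real) \<Rightarrow> 'v set set" where
  "LARGE E l \<beta> x = {e \<in> E. x e \<ge> 1 / (4 * real l * \<beta>)}"

text \<open>Tree embedding (T,M,y) of (G,xt): tree nodes N, tree edges TE, node map M,
  edge-to-path map P (a path is a vertex list), and y.\<close>
definition tree_embedding ::
  "'v set \<Rightarrow> 'v set set \<Rightarrow> ('v set \<Rightarrow> real) \<Rightarrow> 'n set \<Rightarrow> 'n set set \<Rightarrow> ('n \<Rightarrow> 'v)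
    \<Rightarrow> ('n set \<Rightarrow> 'v list) \<Rightarrow> ('n set \<Rightarrow> real) \<Rightarrow> bool" where
  "tree_embedding V E xt N TE M P y \<longleftrightarrow>
     is_tree N TE \<and> M \<in> N \<rightarrow> V \<and> bij_betw M (leaves N TE) V \<and>
     (\<forall>f\<in>TE. \<forall>u v. f = {u, v} \<longrightarrow> is_path V E (P f) \<and>
         ((hd (P f) = M u \<and> last (P f) = M v) \<or> (hd (P f) = M v \<and> last (P f) = M u))) \<and>
     (\<forall>f\<in>TE. \<forall>u\<in>f. y f = sum xt (cut V E (M ` {w \<in> leaves N TE. has_path N (TE - {f}) u w})))"

definition Minv :: "'n set set \<Rightarrow> ('n set \<Rightarrow> 'v list) \<Rightarrow> 'v set set \<Rightarrow> 'n set set" where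
  "Minv TE P F = {f \<in> TE. \<exists>e\<in>F. e \<in> path_edges (P f)}"

definition Medges :: "('n set \<Rightarrow> 'v list) \<Rightarrow> 'n set set \<Rightarrow> 'v set set" where
  "Medges P E' = (\<Union>f\<in>E'. path_edges (P f))"

definition shattered ::
  "'n set \<Rightarrow> 'n set set \<Rightarrow> ('n \<Rightarrow> 'v) \<Rightarrow> ('n set \<Rightarrow> 'v list) \<Rightarrow> 'v set set \<Rightarrow> 'v set \<Rightarrow> bool" where
  "shattered N TE M P F Q \<longleftrightarrow>
     \<not> (\<exists>C \<in> components N (TE - Minv TE P F). leaf_set N TE M Q \<subseteq> C)"

text \<open>Z_F (with components taken in (V, E(H) - F), H = (V, LARGE)).\<close>
definition ZF ::
  "'v set \<Rightarrow> 'v set set \<Rightarrow> nat \<Rightarrow> (nat \<Rightarrow> 'v set) \<Rightarrow> (nat \<Rightarrow> 'v set) \<Rightarrow>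
   'n set \<Rightarrow> 'n set set \<Rightarrow> ('n \<Rightarrow> 'v) \<Rightarrow> ('n set \<Rightarrow> 'v list) \<Rightarrow> 'v set set \<Rightarrow> ('v set \<times> 'v set) set" where
  "ZF V EH q S T N TE M P F =
     (let Sh = {Q \<in> components V (EH - F). shattered N TE M P F Q} in
      {(\<Union>A' \<union> compQ V (EH - F) (S i), \<Union>B' \<union> compQ V (EH - F) (T i)) | A' B' i.
         A' \<union> B' = Sh \<and> A' \<inter> B' = {} \<and> i \<in> {1..q} \<and>
         compQ V (EH - F) (S i) \<inter> compQ V (EH - F) (T i) = {}})"

end

theory Submission
  imports Defs
begin

definition adj :: "'a set \<Rightarrow> 'a set set \<Rightarrow> ('a \<times> 'a) set" where
  "adj V Es = {(a,b). {a,b} \<in> Es \<and> a \<in> V \<and> b \<in> V}"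

lemma chain_lemma:
  "p \<noteq> [] \<Longrightarrow> (\<forall>i. Suc i < length p \<longrightarrow> (f (p!i), f (p!Suc i)) \<in> r\<^sup>*)
   \<Longrightarrow> (f (hd p), f (last p)) \<in> r\<^sup>*"
proof (induction p)
  case Nil then show ?case by simp
next
  case (Cons a p)
  show ?case
  proof (cases "p = []")
    case True then show ?thesis by simp
  next
    case False
    have 1: "(f a, f (hd p)) \<in> r\<^sup>*" using Cons.prems(2)[rule_format, of 0] False
      by (simp add: hd_conv_nth)
    have "\<forall>i. Suc i < length p \<longrightarrow> (f (p!i), f (p!Suc i)) \<in> r\<^sup>*"
    proof (intro allI impI)
      fix i assume "Suc i < length p"
      then show "(f (p!i), f (p!Suc i)) \<in> r\<^sup>*" using Cons.prems(2)[rule_format, of "Suc i"] by simp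
    qed
    then have "(f (hd p), f (last p)) \<in> r\<^sup>*" using Cons.IH False by blast
    with 1 show ?thesis using False by simp
  qed
qed

lemma adj_sym: "(a,b) \<in> (adj V Es)\<^sup>* \<Longrightarrow> (b,a) \<in> (adj V Es)\<^sup>*"
proof (induct rule: rtrancl_induct)
  case base then show ?case by simp
next
  case (step y z)
  then have "(z,y) \<in> adj V Es" by (auto simp: adj_def insert_commute)
  then show ?case using step(3) by (rule converse_rtrancl_into_rtrancl)
qed

lemma adj_mono: "Es \<subseteq> Es' \<Longrightarrow> (a,b) \<in> (adj V Es)\<^sup>* \<Longrightarrow> (a,b) \<in> (adj V Es')\<^sup>*"
proof -
  assume "Es \<subseteq> Es'" "(a,b) \<in> (adj V Es)\<^sup>*"
  moreover have "adj V Es \<subseteq> adj V Es'" using \<open>Es \<subseteq> Es'\<close> by (auto simp: adj_def)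
  ultimately show ?thesis using rtrancl_mono by blast
qed

lemma walk_reach:
  assumes "p \<noteq> []" "set p \<subseteq> V" "\<forall>i. Suc i < length p \<longrightarrow> {p!i, p!Suc i} \<in> Es"
  shows "(hd p, last p) \<in> (adj V Es)\<^sup>*"
proof -
  have "\<forall>i. Suc i < length p \<longrightarrow> (id (p!i), id (p!Suc i)) \<in> (adj V Es)\<^sup>*"
  proof (intro allI impI)
    fix i assume i: "Suc i < length p"
    then have "p!i \<in> V" "p!Suc i \<in> V" using assms(2) nth_mem[of i p] nth_mem[of "Suc i" p] by auto
    then show "(id (p!i), id (p!Suc i)) \<in> (adj V Es)\<^sup>*" using assms(3) i
      by (auto simp: adj_def)
  qed
  from chain_lemma[OF assms(1) this] show ?thesis by simp
qed

lemma has_path_reach: "has_path V Es u v \<Longrightarrow> (u,v) \<in> (adj V Es)\<^sup>*"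
  unfolding has_path_def is_path_def using walk_reach by blast

lemma reach_has_path:
  assumes "(u,v) \<in> (adj V Es)\<^sup>*" "u \<in> V"
  shows "has_path V Es u v"
  using assms(1)
proof (induct rule: rtrancl_induct)
  case base
  have "is_path V Es [u]" using assms(2) by (simp add: is_path_def)
  then show ?case unfolding has_path_def by force
next
  case (step w z)
  then obtain p where p: "is_path V Es p" "hd p = u" "last p = w" unfolding has_path_def by blast
  have wz: "{w,z} \<in> Es" "z \<in> V" using step(2) by (auto simp: adj_def)
  show ?case
  proof (cases "z \<in> set p")
    case True
    then obtain k where k: "k < length p" "p!k = z" by (auto simp: in_set_conv_nth)
    define p' where "p' = take (Suc k) p"
    have "is_path V Es p'" using p(1) k unfolding is_path_def p'_def
      by (auto dest: in_set_takeD)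
    moreover have "hd p' = u" using p k unfolding p'_def is_path_def
      by (simp add: hd_conv_nth)
    moreover have "last p' = z" using k unfolding p'_def
      by (simp add: take_Suc_conv_app_nth)
    ultimately show ?thesis unfolding has_path_def by blast
  next
    case False
    define p' where "p' = p @ [z]"
    have pne: "p \<noteq> []" using p(1) by (simp add: is_path_def)
    have "\<forall>i. Suc i < length p' \<longrightarrow> {p'!i, p'!Suc i} \<in> Es"
    proof (intro allI impI)
      fix i assume i: "Suc i < length p'"
      show "{p'!i, p'!Suc i} \<in> Es"
      proof (cases "Suc i < length p")
        case True then show ?thesis using p(1) unfolding p'_def is_path_def by (simp add: nth_append)
      next
        case False
        then have "i = length p - 1" using i by (simp add: p'_def)
        then have "p'!i = w" "p'!Suc i = z" using pne p(3) False i
          by (auto simp: p'_def nth_append last_conv_nth)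
        then show ?thesis using wz by simp
      qed
    qed
    then have "is_path V Es p'" using p(1) False wz unfolding is_path_def p'_def by auto
    moreover have "hd p' = u" "last p' = z" using p pne unfolding p'_def by auto
    ultimately show ?thesis unfolding has_path_def by blast
  qed
qed

theorem lemma5p5:
  fixes V :: "'v set" and E :: "'v set set" and q :: nat and S T :: "nat \<Rightarrow> 'v set"
    and l :: nat and El :: "'v set set" and x :: "'v set \<Rightarrow> real" and \<beta> :: real
    and F :: "'v set set"
    and N :: "'n set" and TE :: "'n set set" and M :: "'n \<Rightarrow> 'v"
    and P :: "'n set \<Rightarrow> 'v list" and y :: "'n set \<Rightarrow> real" and Eb :: "'n set set"
  assumes G: "graph V E"
    and ST: "\<forall>i\<in>{1..q}. S i \<noteq> {} \<and> T i \<noteq> {} \<and> S i \<subseteq> V \<and> T i \<subseteq> V"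
    and l: "l \<ge> 1"
    and El: "El \<subseteq> E"
    and El_conn: "\<forall>i\<in>{1..q}. \<forall>X. T i \<subseteq> X \<and> X \<subseteq> V - S i \<longrightarrow> card (cut V El X) \<ge> l"
    and x01: "\<forall>e\<in>E. 0 \<le> x e \<and> x e \<le> 1"
    and xEl: "\<forall>e\<in>El. x e = 1"
    and xcut: "\<forall>i\<in>{1..q}. \<forall>X. T i \<subseteq> X \<and> X \<subseteq> V - S i \<longrightarrow>
                 (\<Sum>e\<in>cut V E X. x e) \<ge> real l + 1"
    and \<beta>: "\<beta> \<ge> 1"
    and F: "F \<subseteq> LARGE E l \<beta> x" "card F = l"
    and emb: "tree_embedding V E (xtilde l \<beta> (card V) x) N TE M P y"
    and Eb: "Eb \<subseteq> TE - Minv TE P F"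
    and Z: "\<forall>(A, B) \<in> ZF V (LARGE E l \<beta> x) q S T N TE M P F.
              \<exists>a\<in>leaf_set N TE M A. \<exists>b\<in>leaf_set N TE M B. has_path N Eb a b"
  shows "\<forall>i\<in>{1..q}. \<exists>s\<in>S i. \<exists>t\<in>T i.
           has_path V ((LARGE E l \<beta> x \<union> Medges P Eb) - F) s t"
proof
  fix i assume i: "i \<in> {1..q}"
  define EH where "EH = LARGE E l \<beta> x"
  define H' where "H' = EH - F"
  define G' where "G' = (EH \<union> Medges P Eb) - F"
  define r where "r = adj V G'"
  have HG: "H' \<subseteq> G'" unfolding H'_def G'_def by auto
  have SV: "S i \<subseteq> V" and TV: "T i \<subseteq> V" using ST i by auto
  have emb_paths: "\<forall>f\<in>TE. \<forall>u v. f = {u, v} \<longrightarrow> is_path V E (P f) \<and>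
         ((hd (P f) = M u \<and> last (P f) = M v) \<or> (hd (P f) = M v \<and> last (P f) = M u))"
    using emb unfolding tree_embedding_def by blast
  define R where "R = {w. \<exists>s\<in>S i. (s,w) \<in> r\<^sup>*}"
  have hR: "\<And>a b. a \<in> R \<Longrightarrow> (a,b) \<in> r\<^sup>* \<Longrightarrow> b \<in> R" unfolding R_def
    using rtrancl_trans by fastforce
  have hH: "\<And>a b. has_path V H' a b \<Longrightarrow> (a,b) \<in> r\<^sup>*"
    unfolding r_def by (rule adj_mono[OF HG has_path_reach])
  show "\<exists>s\<in>S i. \<exists>t\<in>T i. has_path V ((LARGE E l \<beta> x \<union> Medges P Eb) - F) s t"
  proof (rule ccontr)
    assume nc: "\<not> ?thesis"
    have TR: "\<And>t. t \<in> T i \<Longrightarrow> t \<notin> R"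
    proof
      fix t assume t: "t \<in> T i" "t \<in> R"
      then obtain s where "s \<in> S i" "(s,t) \<in> r\<^sup>*" unfolding R_def by blast
      then have "has_path V G' s t" using reach_has_path[of s t V G'] SV unfolding r_def by blast
      then have "has_path V ((LARGE E l \<beta> x \<union> Medges P Eb) - F) s t" unfolding G'_def EH_def .
      then show False using nc t \<open>s \<in> S i\<close> by blast
    qed
    have QS: "compQ V H' (S i) \<subseteq> R"
    proof
      fix w assume "w \<in> compQ V H' (S i)"
      then obtain v s where "has_path V H' v w" "has_path V H' v s" "s \<in> S i"
        unfolding compQ_def components_def by blast
      then have "(v,s) \<in> r\<^sup>*" "(v,w) \<in> r\<^sup>*" using hH by blast+
      then have "(s,v) \<in> r\<^sup>*" "(v,w) \<in> r\<^sup>*" using adj_sym[of v s V G'] unfolding r_def by auto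
      then show "w \<in> R" unfolding R_def using \<open>s \<in> S i\<close> using rtrancl_trans by fastforce
    qed
    have QT: "compQ V H' (T i) \<inter> R = {}"
    proof (rule ccontr)
      assume "compQ V H' (T i) \<inter> R \<noteq> {}"
      then obtain w where w: "w \<in> compQ V H' (T i)" "w \<in> R" by blast
      then obtain v t where "has_path V H' v w" "has_path V H' v t" "t \<in> T i"
        unfolding compQ_def components_def by blast
      then have "(v,w) \<in> r\<^sup>*" "(v,t) \<in> r\<^sup>*" using hH by blast+
      then have "(w,v) \<in> r\<^sup>*" "(v,t) \<in> r\<^sup>*" using adj_sym[of v w V G'] unfolding r_def by auto
      then have "t \<in> R" using hR w(2) using rtrancl_trans by fastforce
      then show False using TR \<open>t \<in> T i\<close> by blast
    qed
    have disj: "compQ V H' (S i) \<inter> compQ V H' (T i) = {}" using QS QT by blast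
    define Sh where "Sh = {Q \<in> components V H'. shattered N TE M P F Q}"
    define A' where "A' = {Q \<in> Sh. Q \<subseteq> R}"
    define B' where "B' = Sh - A'"
    have AB: "A' \<union> B' = Sh" "A' \<inter> B' = {}" by (auto simp: A'_def B'_def)
    have mem: "(\<Union>A' \<union> compQ V H' (S i), \<Union>B' \<union> compQ V H' (T i)) \<in> ZF V EH q S T N TE M P F"
      unfolding ZF_def Let_def H'_def[symmetric] Sh_def[symmetric]
      apply (rule CollectI)
      apply (rule exI[of _ A'], rule exI[of _ B'], rule exI[of _ i])
      using AB i disj by simp
    have Z': "\<exists>a\<in>leaf_set N TE M (\<Union>A' \<union> compQ V H' (S i)). \<exists>b\<in>leaf_set N TE M (\<Union>B' \<union> compQ V H' (T i)). has_path N Eb a b"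
      using bspec[OF Z[unfolded EH_def[symmetric]] mem] by (simp only: prod.case)
    then obtain a b where a: "a \<in> leaf_set N TE M (\<Union>A' \<union> compQ V H' (S i))"
      and b: "b \<in> leaf_set N TE M (\<Union>B' \<union> compQ V H' (T i))" and ab: "has_path N Eb a b"
      using Z' by blast
    have MaR: "M a \<in> R" using a QS unfolding leaf_set_def A'_def by auto
    have tree: "(M a, M b) \<in> r\<^sup>*"
    proof -
      obtain p where p: "is_path N Eb p" "hd p = a" "last p = b" using ab unfolding has_path_def by blast
      have "\<forall>j. Suc j < length p \<longrightarrow> (M (p!j), M (p!Suc j)) \<in> r\<^sup>*"
      proof (intro allI impI)
        fix j assume j: "Suc j < length p"
        define f where "f = {p!j, p!Suc j}"
        have fEb: "f \<in> Eb" using p(1) j unfolding is_path_def f_def by blast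
        then have fTE: "f \<in> TE" and fF: "f \<notin> Minv TE P F" using Eb by auto
        have pf: "is_path V E (P f)" and ends: "(hd (P f) = M (p!j) \<and> last (P f) = M (p!Suc j)) \<or>
             (hd (P f) = M (p!Suc j) \<and> last (P f) = M (p!j))"
          using emb_paths[rule_format, OF fTE, of "p!j" "p!Suc j"] unfolding f_def by auto
        have "\<forall>k. Suc k < length (P f) \<longrightarrow> {P f!k, P f!Suc k} \<in> G'"
        proof (intro allI impI)
          fix k assume k: "Suc k < length (P f)"
          have e: "{P f!k, P f!Suc k} \<in> path_edges (P f)" unfolding path_edges_def using k by blast
          then have "{P f!k, P f!Suc k} \<in> Medges P Eb" unfolding Medges_def using fEb by blast
          moreover have "{P f!k, P f!Suc k} \<notin> F" using fF fTE e unfolding Minv_def by blast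
          ultimately show "{P f!k, P f!Suc k} \<in> G'" unfolding G'_def by blast
        qed
        then have "(hd (P f), last (P f)) \<in> r\<^sup>*" using walk_reach pf unfolding is_path_def r_def by blast
        then show "(M (p!j), M (p!Suc j)) \<in> r\<^sup>*" using ends adj_sym[of "hd (P f)" "last (P f)" V G'] unfolding r_def by auto
      qed
      from chain_lemma[of p M r, OF _ this] p show ?thesis unfolding is_path_def by blast
    qed
    have MbR: "M b \<in> R" using hR[OF MaR tree] .
    have "M b \<in> \<Union>B' \<union> compQ V H' (T i)" using b unfolding leaf_set_def by blast
    moreover have "M b \<notin> compQ V H' (T i)" using QT MbR by blast
    ultimately obtain Q where Q: "Q \<in> B'" "M b \<in> Q" by blast
    then have "Q \<in> components V H'" "\<not> Q \<subseteq> R" unfolding B'_def A'_def Sh_def by auto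
    then obtain v w where v: "Q = {w \<in> V. has_path V H' v w}" and w: "w \<in> Q" "w \<notin> R"
      unfolding components_def by blast
    have "has_path V H' v (M b)" "has_path V H' v w" using Q(2) w v by auto
    then have "(v, M b) \<in> r\<^sup>*" "(v, w) \<in> r\<^sup>*" using hH by blast+
    then have "(M b, v) \<in> r\<^sup>*" "(v, w) \<in> r\<^sup>*" using adj_sym[of v "M b" V G'] unfolding r_def by auto
    then have "w \<in> R" using hR MbR using rtrancl_trans by fastforce
    then show False using w by blast
  qed
qed

end
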